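(* Let $(X,Y,R)$ be a random triple with $X\in\mathbb{R}^d$, $Y\in\{0,1\}$, $R\in\{0,1\}$, $0<P(R=1)<1$, with all conditional probabilities $P(R=r\mid X,Y)$, $P(Y=y\mid X,R=r)$ in $(0,1)$. Let $T:\mathbb{R}^d\to\mathbb{R}^k$ be measurable and for $\theta=(\alpha_0,\alpha_1,\beta_0,\beta_1)\in\mathbb{R}\times\mathbb{R}\times\mathbb{R}^k\times\mathbb{R}^k$ set $\omega(x,y;\theta)=\exp(\alpha_y+\beta_y^\top T(x))$, $$\eta_r(x,y;\theta)=\frac{P(R=1)}{P(R=1)+\omega(x,y;\theta)P(R=0)},\qquad \gamma(1\mid x;\theta)=(\alpha_1-\alpha_0)+(\beta_1-\beta_0)^\top T(x).$$ Let $\{\eta_1(\cdot;\xi):\xi\in\Xi\}$ be a family of measurable functions $\mathbb{R}^d\to(0,1)$, and set $$m_0(x;\theta,\xi)=\frac{e^{\gamma(1\mid x;\theta)}\eta_1(x;\xi)}{e^{\gamma(1\mid x;\theta)}\eta_1(x;\xi)+1-\eta_1(x;\xi)}.$$ Let $\tau:\mathbb{R}^d\times\{0,1\}\to\mathbb{R}$ and $m_{0,\tau}(x;\theta,\xi)=\tau(x,0)+\{\tau(x,1)-\tau(x,0)\}m_0(x;\theta,\xi)$. Fix $\theta^\star$ and $\xi^\star\in\Xi$, and assume all expectations below are finite. Define $$\text{a-bias}(\widehat\mu_{0,\mathrm{IW}})=\mathbb{E}\Big[\Big\{\tfrac{R}{P(R=1)}\omega(X,Y;\theta^\star)-\tfrac{1-R}{P(R=0)}\Big\}\tau(X,Y)\Big],\quad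 \text{a-bias}(\widehat\mu_{\mathrm{IW}})=\mathbb{E}\Big[\Big\{\tfrac{R}{\eta_r(X,Y;\theta^\star)}-1\Big\}\tau(X,Y)\Big],$$ $$\text{a-bias}(\widehat\mu_{0,\mathrm{DR}})=\mathbb{E}\Big[\Big\{\tfrac{R}{P(R=1)}\omega(X,Y;\theta^\star)-\tfrac{1-R}{P(R=0)}\Big\}\{\tau(X,Y)-m_{0,\tau}(X;\theta^\star,\xi^\star)\}\Big],$$ $$\text{a-bias}(\widehat\mu_{\mathrm{DR}})=\mathbb{E}\Big[\Big\{\tfrac{R}{\eta_r(X,Y;\theta^\star)}-1\Big\}\{\tau(X,Y)-m_{0,\tau}(X;\theta^\star,\xi^\star)\}\Big].$$ Then: (i) If $\mathbb{E}[R\mid X,Y]=\eta_r(X,Y;\theta^\star)$, then $\text{a-bias}(\widehat\mu_{0,\mathrm{IW}})=\text{a-bias}(\widehat\mu_{\mathrm{IW}})=\text{a-bias}(\widehat\mu_{0,\mathrm{DR}})=\text{a-bias}(\widehat\mu_{\mathrm{DR}})=0$. (ii) If $\gamma(1\mid x)=\gamma(1\mid x;\theta^\star)$ for all $x$ and $\mathbb{E}[Y\mid X,R=0]=m_0(X;\theta^\star,\xi^\star)$, then $\text{a-bias}(\widehat\mu_{0,\mathrm{DR}})=\text{a-bias}(\widehat\mu_{\mathrm{DR}})=0$. Here $\gamma(y\mid x)=\log\Big\{\dfrac{P(R=0\mid Y=y,X=x)\,P(R=1\mid Y=0,X=x)}{P(R=1\mid Y=y,X=x)\,P(R=0\mid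 Y=0,X=x)}\Big\}$ is the true log odds ratio.
   Context: $R=1$ indicates that $Y$ is observed, $R=0$ that it is missing. The quantities "a-bias" are the asymptotic biases of importance-weighted (IW) and doubly robust (DR) estimators of $\mathbb{E}[\tau(X,Y)\mid R=0]$ and $\mathbb{E}[\tau(X,Y)]$ whose tilt-parameter estimates converge to $\theta^\star$ and whose outcome-model estimates $\eta_1(\cdot;\widehat\xi)$ of $P(Y=1\mid X,R=1)$ converge to parameter $\xi^\star$; for the purposes of this statement they are defined by the displayed expressions. *)

theory Defs
  imports "HOL-Probability.Probability"
begin

type_synonym ('k) tilt = "real \<times> real \<times> (real^'k) \<times> (real^'k)"

definition omega_tilt :: "(real^'d \<Rightarrow> real^'k) \<Rightarrow> 'k tilt \<Rightarrow> real^'d \<Rightarrow> real \<Rightarrow> real" where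
  "omega_tilt T \<theta> x y = (case \<theta> of (a0, a1, b0, b1) \<Rightarrow>
      (if y = 1 then exp (a1 + b1 \<bullet> T x) else exp (a0 + b0 \<bullet> T x)))"

definition eta_r :: "real \<Rightarrow> real \<Rightarrow> (real^'d \<Rightarrow> real^'k) \<Rightarrow> 'k tilt \<Rightarrow> real^'d \<Rightarrow> real \<Rightarrow> real" where
  "eta_r p1 p0 T \<theta> x y = p1 / (p1 + omega_tilt T \<theta> x y * p0)"

definition gamma_model :: "(real^'d \<Rightarrow> real^'k) \<Rightarrow> 'k tilt \<Rightarrow> real^'d \<Rightarrow> real" where
  "gamma_model T \<theta> x = (case \<theta> of (a0, a1, b0, b1) \<Rightarrow> (a1 - a0) + (b1 - b0) \<bullet> T x)"

definition m0 :: "(real^'d \<Rightarrow> real^'k) \<Rightarrow> 'k tilt \<Rightarrow> (real^'d \<Rightarrow> real) \<Rightarrow> real^'d \<Rightarrow> real" where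
  "m0 T \<theta> eta1 x =
     exp (gamma_model T \<theta> x) * eta1 x / (exp (gamma_model T \<theta> x) * eta1 x + 1 - eta1 x)"

definition m0_tau :: "(real^'d \<Rightarrow> real \<Rightarrow> real) \<Rightarrow> (real^'d \<Rightarrow> real^'k) \<Rightarrow> 'k tilt \<Rightarrow> (real^'d \<Rightarrow> real) \<Rightarrow> real^'d \<Rightarrow> real" where
  "m0_tau \<tau> T \<theta> eta1 x = \<tau> x 0 + (\<tau> x 1 - \<tau> x 0) * m0 T \<theta> eta1 x"

text \<open>True log odds ratio gamma(1|x), in terms of pi(x,y) = P(R=1 | X=x, Y=y).\<close>
definition gamma_true :: "(real^'d \<Rightarrow> real \<Rightarrow> real) \<Rightarrow> real^'d \<Rightarrow> real" where
  "gamma_true \<pi> x = ln (((1 - \<pi> x 1) * \<pi> x 0) / (\<pi> x 1 * (1 - \<pi> x 0)))"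

end

theory Submission
  imports Defs
begin

lemma m0_bounds_aux: assumes "0 < (e::real)" "0 < (n::real)" "n < 1" shows "0 < e * n / (e * n + 1 - n) \<and> e * n / (e * n + 1 - n) < 1"
proof -
  have a: "0 < e * n" using assms by simp
  have b: "e * n < e * n + 1 - n" using assms by simp
  show ?thesis using a b by (metis divide_less_eq_1_pos divide_pos_pos order.strict_trans)
qed

lemma aux_eq1: fixes p1 p0 w r g :: real assumes "0 < p1" "0 < p0" "0 < w"
  shows "(r / p1 * w - (1 - r) / p0) * g = g * (w / p1 + 1 / p0) * (r - p1 / (p1 + w * p0))"
proof -
  define D where "D = p1 + w * p0"
  have d: "D > 0" unfolding D_def using assms by (simp add: add_pos_pos)
  have e1: "w / p1 + 1 / p0 = D / (p1 * p0)" unfolding D_def using assms by (simp add: field_simps)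
  have e2: "r - p1 / D = (r * D - p1) / D" using d by (simp add: field_simps)
  have "g * (w / p1 + 1 / p0) * (r - p1 / D) = g * (r * D - p1) / (p1 * p0)"
    unfolding e1 e2 using d by simp
  also have "\<dots> = (r / p1 * w - (1 - r) / p0) * g"
    unfolding D_def using assms by (simp add: field_simps)
  finally show ?thesis unfolding D_def ..
qed
lemma aux_eq2: fixes p1 p0 w r :: real assumes "0 < p1" "0 < p0" "0 < w"
  shows "r / (p1 / (p1 + w * p0)) - 1 = p0 * (r / p1 * w - (1 - r) / p0)"
proof -
  have d: "p1 + w * p0 > 0" using assms by (simp add: add_pos_pos)
  then show ?thesis using assms by (simp add: field_simps)
qed

context sigma_finite_subalgebra begin
lemma integrable_from_cond_exp:
  assumes [measurable]: "f \<in> borel_measurable F" "g \<in> borel_measurable M"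
    and g_nn: "\<And>x. 0 \<le> g x" and int_g: "integrable M g"
    and int: "integrable M (\<lambda>x. f x * real_cond_exp M F g x)"
  shows "integrable M (\<lambda>x. f x * g x)"
proof -
  have fM[measurable]: "f \<in> borel_measurable M" by (rule measurable_from_subalg[OF subalg]) simp
  have "(\<integral>\<^sup>+ x. nn_cond_exp M F (\<lambda>x. ennreal (g x)) x \<partial>M) = (\<integral>\<^sup>+ x. 1 * nn_cond_exp M F (\<lambda>x. ennreal (g x)) x \<partial>M)"
    by simp
  also have "\<dots> = (\<integral>\<^sup>+ x. 1 * ennreal (g x) \<partial>M)"
    by (rule nn_cond_exp_intg) auto
  also have "\<dots> < \<infinity>" using int_g g_nn by (simp add: integrable_iff_bounded less_top)
  finally have fin: "AE x in M. nn_cond_exp M F (\<lambda>x. ennreal (g x)) x \<noteq> \<infinity>"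
    by (intro nn_integral_PInf_AE) auto
  have "(\<lambda>x. ennreal(-g x)) = (\<lambda>x. 0)" using g_nn by (simp add: ennreal_neg)
  moreover have "AE x in M. 0 = nn_cond_exp M F (\<lambda>x. 0) x"
    by (rule nn_cond_exp_F_meas, auto)
  ultimately have z: "AE x in M. nn_cond_exp M F (\<lambda>x. ennreal(-g x)) x = 0"
    by simp
  have ae: "AE x in M. nn_cond_exp M F (\<lambda>x. ennreal (g x)) x = ennreal (real_cond_exp M F g x)"
    using fin z by eventually_elim (simp add: real_cond_exp_def ennreal_enn2real_if)
  have "(\<integral>\<^sup>+ x. ennreal (norm (f x * g x)) \<partial>M) = (\<integral>\<^sup>+ x. ennreal \<bar>f x\<bar> * ennreal (g x) \<partial>M)"
    using g_nn by (intro nn_integral_cong) (simp add: abs_mult ennreal_mult)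
  also have "\<dots> = (\<integral>\<^sup>+ x. ennreal \<bar>f x\<bar> * nn_cond_exp M F (\<lambda>x. ennreal (g x)) x \<partial>M)"
    by (rule nn_cond_exp_intg[symmetric]) auto
  also have "\<dots> = (\<integral>\<^sup>+ x. ennreal \<bar>f x\<bar> * ennreal (real_cond_exp M F g x) \<partial>M)"
    using ae by (intro nn_integral_cong_AE) auto
  also have "\<dots> \<le> (\<integral>\<^sup>+ x. ennreal (norm (f x * real_cond_exp M F g x)) \<partial>M)"
    by (intro nn_integral_mono) (auto simp: ennreal_mult'[symmetric] abs_mult intro!: ennreal_leI mult_left_mono)
  also have "\<dots> < \<infinity>" using int by (simp add: integrable_iff_bounded)
  finally show ?thesis by (intro integrableI_bounded) auto
qed
end

theorem theorem1:
  fixes M :: "'a measure"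
    and X :: "'a \<Rightarrow> real^'d" and Y R :: "'a \<Rightarrow> real"
    and T :: "real^'d \<Rightarrow> real^'k"
    and \<pi> :: "real^'d \<Rightarrow> real \<Rightarrow> real"
    and Xi :: "'x set" and eta1 :: "'x \<Rightarrow> real^'d \<Rightarrow> real"
    and \<tau> :: "real^'d \<Rightarrow> real \<Rightarrow> real"
    and \<theta>s :: "'k tilt" and \<xi>s :: 'x
    and p1 p0 :: real and FXY FXR :: "'a measure"
  assumes M: "prob_space M"
    and X_meas: "X \<in> borel_measurable M"
    and Y_meas: "Y \<in> borel_measurable M"
    and R_meas: "R \<in> borel_measurable M"
    and Y_01: "\<forall>\<omega>\<in>space M. Y \<omega> \<in> {0, 1}"
    and R_01: "\<forall>\<omega>\<in>space M. R \<omega> \<in> {0, 1}"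
    and p1_def: "p1 = measure M {\<omega> \<in> space M. R \<omega> = 1}"
    and p0_def: "p0 = measure M {\<omega> \<in> space M. R \<omega> = 0}"
    and p1_bounds: "0 < p1" "p1 < 1"
    and FXY_def: "FXY = vimage_algebra (space M) (\<lambda>\<omega>. (X \<omega>, Y \<omega>)) borel"
    and FXR_def: "FXR = vimage_algebra (space M) (\<lambda>\<omega>. (X \<omega>, R \<omega>)) borel"
    \<comment> \<open>pi(x,y) is a (measurable) version of P(R=1 | X=x, Y=y), with values in (0,1)\<close>
    and \<pi>_meas: "(\<lambda>(x, y). \<pi> x y) \<in> borel_measurable borel"
    and \<pi>_version: "AE \<omega> in M. real_cond_exp M FXY R \<omega> = \<pi> (X \<omega>) (Y \<omega>)"
    and \<pi>_bounds: "\<forall>x y. 0 < \<pi> x y \<and> \<pi> x y < 1"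
    \<comment> \<open>P(Y = y | X, R = r) in (0,1)\<close>
    and PY_bounds: "\<forall>y\<in>{0::real, 1}. AE \<omega> in M.
        0 < real_cond_exp M FXR (\<lambda>\<omega>. if Y \<omega> = y then 1 else 0) \<omega> \<and>
        real_cond_exp M FXR (\<lambda>\<omega>. if Y \<omega> = y then 1 else 0) \<omega> < 1"
    and T_meas: "T \<in> borel_measurable borel"
    and eta1_meas: "\<forall>\<xi>\<in>Xi. eta1 \<xi> \<in> borel_measurable borel"
    and eta1_bounds: "\<forall>\<xi>\<in>Xi. \<forall>x. 0 < eta1 \<xi> x \<and> eta1 \<xi> x < 1"
    and \<tau>_meas: "(\<lambda>(x, y). \<tau> x y) \<in> borel_measurable borel"
    and \<xi>s_in: "\<xi>s \<in> Xi"
    \<comment> \<open>all expectations below are finite\<close>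
    and int_IW0: "integrable M (\<lambda>\<omega>. (R \<omega> / p1 * omega_tilt T \<theta>s (X \<omega>) (Y \<omega>) - (1 - R \<omega>) / p0)
                       * \<tau> (X \<omega>) (Y \<omega>))"
    and int_IW: "integrable M (\<lambda>\<omega>. (R \<omega> / eta_r p1 p0 T \<theta>s (X \<omega>) (Y \<omega>) - 1) * \<tau> (X \<omega>) (Y \<omega>))"
    and int_DR0: "integrable M (\<lambda>\<omega>. (R \<omega> / p1 * omega_tilt T \<theta>s (X \<omega>) (Y \<omega>) - (1 - R \<omega>) / p0)
                       * (\<tau> (X \<omega>) (Y \<omega>) - m0_tau \<tau> T \<theta>s (eta1 \<xi>s) (X \<omega>)))"
    and int_DR: "integrable M (\<lambda>\<omega>. (R \<omega> / eta_r p1 p0 T \<theta>s (X \<omega>) (Y \<omega>) - 1)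
                       * (\<tau> (X \<omega>) (Y \<omega>) - m0_tau \<tau> T \<theta>s (eta1 \<xi>s) (X \<omega>)))"
  shows
    "((AE \<omega> in M. real_cond_exp M FXY R \<omega> = eta_r p1 p0 T \<theta>s (X \<omega>) (Y \<omega>)) \<longrightarrow>
        (\<integral>\<omega>. (R \<omega> / p1 * omega_tilt T \<theta>s (X \<omega>) (Y \<omega>) - (1 - R \<omega>) / p0)
               * \<tau> (X \<omega>) (Y \<omega>) \<partial>M) = 0 \<and>
        (\<integral>\<omega>. (R \<omega> / eta_r p1 p0 T \<theta>s (X \<omega>) (Y \<omega>) - 1) * \<tau> (X \<omega>) (Y \<omega>) \<partial>M) = 0 \<and>
        (\<integral>\<omega>. (R \<omega> / p1 * omega_tilt T \<theta>s (X \<omega>) (Y \<omega>) - (1 - R \<omega>) / p0)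
               * (\<tau> (X \<omega>) (Y \<omega>) - m0_tau \<tau> T \<theta>s (eta1 \<xi>s) (X \<omega>)) \<partial>M) = 0 \<and>
        (\<integral>\<omega>. (R \<omega> / eta_r p1 p0 T \<theta>s (X \<omega>) (Y \<omega>) - 1)
               * (\<tau> (X \<omega>) (Y \<omega>) - m0_tau \<tau> T \<theta>s (eta1 \<xi>s) (X \<omega>)) \<partial>M) = 0)
     \<and>
     (((\<forall>x. gamma_true \<pi> x = gamma_model T \<theta>s x) \<and>
       (AE \<omega> in M. R \<omega> = 0 \<longrightarrow> real_cond_exp M FXR Y \<omega> = m0 T \<theta>s (eta1 \<xi>s) (X \<omega>))) \<longrightarrow>
        (\<integral>\<omega>. (R \<omega> / p1 * omega_tilt T \<theta>s (X \<omega>) (Y \<omega>) - (1 - R \<omega>) / p0)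
               * (\<tau> (X \<omega>) (Y \<omega>) - m0_tau \<tau> T \<theta>s (eta1 \<xi>s) (X \<omega>)) \<partial>M) = 0 \<and>
        (\<integral>\<omega>. (R \<omega> / eta_r p1 p0 T \<theta>s (X \<omega>) (Y \<omega>) - 1)
               * (\<tau> (X \<omega>) (Y \<omega>) - m0_tau \<tau> T \<theta>s (eta1 \<xi>s) (X \<omega>)) \<partial>M) = 0)"
proof -
  interpret P: prob_space M by (rule M)
  obtain a0 a1 b0 b1 where th: "\<theta>s = (a0, a1, b0, b1)" by (cases \<theta>s) auto
  note [measurable] = X_meas Y_meas R_meas T_meas
  have pim[measurable]: "(\<lambda>(x, y). \<pi> x y) \<in> borel_measurable (borel \<Otimes>\<^sub>M borel)"
    using \<pi>_meas by (simp add: borel_prod)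
  have taum[measurable]: "(\<lambda>(x, y). \<tau> x y) \<in> borel_measurable (borel \<Otimes>\<^sub>M borel)"
    using \<tau>_meas by (simp add: borel_prod)
  have etam[measurable]: "eta1 \<xi>s \<in> borel_measurable borel" using eta1_meas \<xi>s_in by auto
  have evR1: "{\<omega> \<in> space M. R \<omega> = 1} \<in> sets M" by measurable
  have p0_eq: "p0 = 1 - p1"
  proof -
    have "{\<omega> \<in> space M. R \<omega> = 0} = space M - {\<omega> \<in> space M. R \<omega> = 1}" using R_01 by auto
    then show ?thesis unfolding p0_def p1_def using P.prob_compl[OF evR1] by simp
  qed
  have p0_pos: "0 < p0" using p0_eq p1_bounds by simp
  have W_pos: "\<And>x y. 0 < omega_tilt T \<theta>s x y" by (simp add: omega_tilt_def th)
  have Wm[measurable]: "(\<lambda>(x,y). omega_tilt T \<theta>s x y) \<in> borel_measurable (borel \<Otimes>\<^sub>M borel)"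
    unfolding omega_tilt_def th by measurable
  have gm[measurable]: "gamma_model T \<theta>s \<in> borel_measurable borel"
    unfolding gamma_model_def th by measurable
  have m0m[measurable]: "m0 T \<theta>s (eta1 \<xi>s) \<in> borel_measurable borel"
    unfolding m0_def by measurable
  have m0b: "\<And>x. 0 < m0 T \<theta>s (eta1 \<xi>s) x \<and> m0 T \<theta>s (eta1 \<xi>s) x < 1"
  proof -
    fix x
    have "0 < eta1 \<xi>s x" "eta1 \<xi>s x < 1" using eta1_bounds \<xi>s_in by auto
    then have "0 < exp (gamma_model T \<theta>s x) * eta1 \<xi>s x / (exp (gamma_model T \<theta>s x) * eta1 \<xi>s x + 1 - eta1 \<xi>s x) \<and> exp (gamma_model T \<theta>s x) * eta1 \<xi>s x / (exp (gamma_model T \<theta>s x) * eta1 \<xi>s x + 1 - eta1 \<xi>s x) < 1"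
      by (intro m0_bounds_aux exp_gt_zero)
    then show "0 < m0 T \<theta>s (eta1 \<xi>s) x \<and> m0 T \<theta>s (eta1 \<xi>s) x < 1"
      unfolding m0_def .
  qed
  have subXY: "subalgebra M FXY"
    unfolding subalgebra_def FXY_def
    by (auto simp: sets_vimage_algebra2 intro!: measurable_sets)
  have subXR: "subalgebra M FXR"
    unfolding subalgebra_def FXR_def
    by (auto simp: sets_vimage_algebra2 intro!: measurable_sets)
  interpret XY: finite_measure_subalgebra M FXY
    unfolding finite_measure_subalgebra_def finite_measure_subalgebra_axioms_def
    using subXY P.finite_measure_axioms by simp
  interpret XR: finite_measure_subalgebra M FXR
    unfolding finite_measure_subalgebra_def finite_measure_subalgebra_axioms_def
    using subXR P.finite_measure_axioms by simp
  have ZXY: "(\<lambda>\<omega>. (X \<omega>, Y \<omega>)) \<in> measurable FXY (borel \<Otimes>\<^sub>M borel)"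
    unfolding FXY_def borel_prod by (rule measurable_vimage_algebra1) auto
  have mXY: "(\<lambda>\<omega>. h (X \<omega>) (Y \<omega>)) \<in> borel_measurable FXY"
    if hm: "(\<lambda>(x,y). h x y) \<in> borel_measurable (borel \<Otimes>\<^sub>M borel)" for h
    using measurable_compose[OF ZXY hm] by simp
  have ZXR: "(\<lambda>\<omega>. (X \<omega>, R \<omega>)) \<in> measurable FXR (borel \<Otimes>\<^sub>M borel)"
    unfolding FXR_def borel_prod by (rule measurable_vimage_algebra1) auto
  have mXR: "(\<lambda>\<omega>. h (X \<omega>) (R \<omega>)) \<in> borel_measurable FXR"
    if hm: "(\<lambda>(x,y). h x y) \<in> borel_measurable (borel \<Otimes>\<^sub>M borel)" for h
    using measurable_compose[OF ZXR hm] by simp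
  have W_meas_XY: "(\<lambda>\<omega>. omega_tilt T \<theta>s (X \<omega>) (Y \<omega>)) \<in> borel_measurable FXY"
    by (rule mXY) (rule Wm)
  have intR: "integrable M R"
    by (rule P.integrable_const_bound[where B=1]) (use R_01 in \<open>auto intro!: AE_I2\<close>)
  have intY: "integrable M Y"
    by (rule P.integrable_const_bound[where B=1]) (use Y_01 in \<open>auto intro!: AE_I2\<close>)
  have gen_i: "(\<integral>\<omega>. (R \<omega> / p1 * omega_tilt T \<theta>s (X \<omega>) (Y \<omega>) - (1 - R \<omega>) / p0) * G \<omega> \<partial>M) = 0"
    if ae: "AE \<omega> in M. real_cond_exp M FXY R \<omega> = eta_r p1 p0 T \<theta>s (X \<omega>) (Y \<omega>)"
      and Gm: "G \<in> borel_measurable FXY"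
      and int: "integrable M (\<lambda>\<omega>. (R \<omega> / p1 * omega_tilt T \<theta>s (X \<omega>) (Y \<omega>) - (1 - R \<omega>) / p0) * G \<omega>)"
    for G
  proof -
    define e where "e \<omega> = eta_r p1 p0 T \<theta>s (X \<omega>) (Y \<omega>)" for \<omega>
    define Fv where "Fv \<omega> = G \<omega> * (omega_tilt T \<theta>s (X \<omega>) (Y \<omega>) / p1 + 1 / p0)" for \<omega>
    have eq: "(R \<omega> / p1 * omega_tilt T \<theta>s (X \<omega>) (Y \<omega>) - (1 - R \<omega>) / p0) * G \<omega> = Fv \<omega> * (R \<omega> - e \<omega>)" for \<omega>
      unfolding Fv_def e_def eta_r_def using p1_bounds(1) p0_pos W_pos by (rule aux_eq1)
    have em: "e \<in> borel_measurable FXY" unfolding e_def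
      by (rule mXY) (unfold eta_r_def, measurable)
    have emM: "e \<in> borel_measurable M" by (rule measurable_from_subalg[OF subXY em])
    have Fm: "Fv \<in> borel_measurable FXY" unfolding Fv_def using Gm W_meas_XY by measurable
    have epos: "0 < e \<omega> \<and> e \<omega> \<le> 1" for \<omega>
    proof -
      have "0 < omega_tilt T \<theta>s (X \<omega>) (Y \<omega>)" by (rule W_pos)
      then have "0 < omega_tilt T \<theta>s (X \<omega>) (Y \<omega>) * p0" using p0_pos by simp
      then show ?thesis unfolding e_def eta_r_def using p1_bounds by (simp add: divide_le_eq_1_pos)
    qed
    have eabs: "norm (e \<omega>) \<le> 1" for \<omega> using epos[of \<omega>] by simp
    have inte: "integrable M e"
      by (rule P.integrable_const_bound[where B=1]) (use eabs emM in auto)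
    have int2: "integrable M (\<lambda>\<omega>. Fv \<omega> * (R \<omega> - e \<omega>))" using int eq by simp
    have "(\<integral>\<omega>. Fv \<omega> * (R \<omega> - e \<omega>) \<partial>M) = (\<integral>\<omega>. Fv \<omega> * real_cond_exp M FXY (\<lambda>\<omega>. R \<omega> - e \<omega>) \<omega> \<partial>M)"
      by (rule XY.real_cond_exp_intg(2)[symmetric]) (use int2 Fm emM in auto)
    also have "\<dots> = (\<integral>\<omega>. 0 \<partial>M)"
    proof (rule integral_cong_AE)
      show "(\<lambda>\<omega>. Fv \<omega> * real_cond_exp M FXY (\<lambda>\<omega>. R \<omega> - e \<omega>) \<omega>) \<in> borel_measurable M"
        using measurable_from_subalg[OF subXY Fm] by measurable
      show "(\<lambda>\<omega>. 0::real) \<in> borel_measurable M" by simp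
      have a1: "AE \<omega> in M. real_cond_exp M FXY (\<lambda>\<omega>. R \<omega> - e \<omega>) \<omega> = real_cond_exp M FXY R \<omega> - real_cond_exp M FXY e \<omega>"
        by (rule XY.real_cond_exp_diff) (use intR inte in auto)
      have a2: "AE \<omega> in M. real_cond_exp M FXY e \<omega> = e \<omega>"
        by (rule XY.real_cond_exp_F_meas) (use inte em in auto)
      show "AE \<omega> in M. Fv \<omega> * real_cond_exp M FXY (\<lambda>\<omega>. R \<omega> - e \<omega>) \<omega> = 0"
        using a1 a2 ae by eventually_elim (simp add: e_def)
    qed
    finally show ?thesis using eq by simp
  qed
  have IW_eq: "R \<omega> / eta_r p1 p0 T \<theta>s (X \<omega>) (Y \<omega>) - 1 = p0 * (R \<omega> / p1 * omega_tilt T \<theta>s (X \<omega>) (Y \<omega>) - (1 - R \<omega>) / p0)" for \<omega>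
    unfolding eta_r_def using p1_bounds(1) p0_pos W_pos by (rule aux_eq2)
  have IW_int: "(\<integral>\<omega>. (R \<omega> / eta_r p1 p0 T \<theta>s (X \<omega>) (Y \<omega>) - 1) * G \<omega> \<partial>M) = p0 * (\<integral>\<omega>. (R \<omega> / p1 * omega_tilt T \<theta>s (X \<omega>) (Y \<omega>) - (1 - R \<omega>) / p0) * G \<omega> \<partial>M)" for G
    by (simp add: IW_eq mult.assoc)
  have tauXY: "(\<lambda>\<omega>. \<tau> (X \<omega>) (Y \<omega>)) \<in> borel_measurable FXY"
    by (rule mXY) (rule taum)
  have DXY: "(\<lambda>\<omega>. \<tau> (X \<omega>) (Y \<omega>) - m0_tau \<tau> T \<theta>s (eta1 \<xi>s) (X \<omega>)) \<in> borel_measurable FXY"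
    by (rule mXY) (unfold m0_tau_def, measurable)
  have part2: "(\<integral>\<omega>. (R \<omega> / p1 * omega_tilt T \<theta>s (X \<omega>) (Y \<omega>) - (1 - R \<omega>) / p0)
               * (\<tau> (X \<omega>) (Y \<omega>) - m0_tau \<tau> T \<theta>s (eta1 \<xi>s) (X \<omega>)) \<partial>M) = 0"
    if gam: "\<forall>x. gamma_true \<pi> x = gamma_model T \<theta>s x"
      and mae: "AE \<omega> in M. R \<omega> = 0 \<longrightarrow> real_cond_exp M FXR Y \<omega> = m0 T \<theta>s (eta1 \<xi>s) (X \<omega>)"
  proof -
    define \<delta> where "\<delta> x = \<tau> x 1 - \<tau> x 0" for x
    define m where "m x = m0 T \<theta>s (eta1 \<xi>s) x" for x
    define K where "K x = \<pi> x 0 / (1 - \<pi> x 0) * exp (a0 + b0 \<bullet> T x)" for x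
    define Dv where "Dv \<omega> = \<tau> (X \<omega>) (Y \<omega>) - m0_tau \<tau> T \<theta>s (eta1 \<xi>s) (X \<omega>)" for \<omega>
    have \<delta>m[measurable]: "\<delta> \<in> borel_measurable borel" unfolding \<delta>_def by measurable
    have mm[measurable]: "m \<in> borel_measurable borel" unfolding m_def by measurable
    have Km[measurable]: "K \<in> borel_measurable borel" unfolding K_def by measurable
    have mXm: "(\<lambda>\<omega>. m (X \<omega>)) \<in> borel_measurable FXR"
      by (rule mXR[of "\<lambda>x r. m x"]) measurable
    have intmX: "integrable M (\<lambda>\<omega>. m (X \<omega>))"
      by (rule P.integrable_const_bound[where B=1]) (use m0b in \<open>auto simp: m_def abs_le_iff less_imp_le intro!: AE_I2\<close>)
    have gen_A: "(\<integral>\<omega>. (1 - R \<omega>) * Kf (X \<omega>) * (Y \<omega> - m (X \<omega>)) \<partial>M) = 0"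
      if Kfm: "Kf \<in> borel_measurable borel"
        and int: "integrable M (\<lambda>\<omega>. (1 - R \<omega>) * Kf (X \<omega>) * (Y \<omega> - m (X \<omega>)))" for Kf
    proof -
      have fA: "(\<lambda>\<omega>. (1 - R \<omega>) * Kf (X \<omega>)) \<in> borel_measurable FXR"
        by (rule mXR[of "\<lambda>x r. (1 - r) * Kf x"]) (use Kfm in measurable)
      have "(\<integral>\<omega>. (1 - R \<omega>) * Kf (X \<omega>) * (Y \<omega> - m (X \<omega>)) \<partial>M)
          = (\<integral>\<omega>. (1 - R \<omega>) * Kf (X \<omega>) * real_cond_exp M FXR (\<lambda>\<omega>. Y \<omega> - m (X \<omega>)) \<omega> \<partial>M)"
        by (rule XR.real_cond_exp_intg(2)[symmetric]) (use int fA in auto)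
      also have "\<dots> = (\<integral>\<omega>. 0 \<partial>M)"
      proof (rule integral_cong_AE)
        show "(\<lambda>\<omega>. (1 - R \<omega>) * Kf (X \<omega>) * real_cond_exp M FXR (\<lambda>\<omega>. Y \<omega> - m (X \<omega>)) \<omega>) \<in> borel_measurable M"
          using Kfm by measurable
        show "(\<lambda>\<omega>. 0::real) \<in> borel_measurable M" by simp
        have a1: "AE \<omega> in M. real_cond_exp M FXR (\<lambda>\<omega>. Y \<omega> - m (X \<omega>)) \<omega> = real_cond_exp M FXR Y \<omega> - real_cond_exp M FXR (\<lambda>\<omega>. m (X \<omega>)) \<omega>"
          by (rule XR.real_cond_exp_diff) (use intY intmX in auto)
        have a2: "AE \<omega> in M. real_cond_exp M FXR (\<lambda>\<omega>. m (X \<omega>)) \<omega> = m (X \<omega>)"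
          by (rule XR.real_cond_exp_F_meas) (use intmX mXm in auto)
        show "AE \<omega> in M. (1 - R \<omega>) * Kf (X \<omega>) * real_cond_exp M FXR (\<lambda>\<omega>. Y \<omega> - m (X \<omega>)) \<omega> = 0"
          using a1 a2 mae AE_space
        proof eventually_elim
          case (elim \<omega>)
          then have "R \<omega> = 0 \<or> R \<omega> = 1" using R_01 by auto
          then show ?case using elim by (auto simp: m_def)
        qed
      qed
      finally show ?thesis by simp
    qed
    have D_eq: "Dv \<omega> = \<delta> (X \<omega>) * (Y \<omega> - m (X \<omega>))" if "\<omega> \<in> space M" for \<omega>
    proof -
      have "Y \<omega> = 0 \<or> Y \<omega> = 1" using Y_01 that by auto
      then show ?thesis unfolding Dv_def \<delta>_def m_def m0_tau_def by (auto simp: algebra_simps)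
    qed
    have key: "\<pi> x y * omega_tilt T \<theta>s x y = (1 - \<pi> x y) * K x" if "y = 0 \<or> y = 1" for x y
    proof -
      have b0: "0 < \<pi> x 0" "\<pi> x 0 < 1" and b1: "0 < \<pi> x 1" "\<pi> x 1 < 1" using \<pi>_bounds by auto
      from that show ?thesis
      proof
        assume y: "y = 0"
        show ?thesis using b0 unfolding y K_def omega_tilt_def th by (simp add: field_simps)
      next
        assume y: "y = 1"
        have pos: "0 < (1 - \<pi> x 1) * \<pi> x 0 / (\<pi> x 1 * (1 - \<pi> x 0))" using b0 b1 by simp
        have "exp (gamma_model T \<theta>s x) = (1 - \<pi> x 1) * \<pi> x 0 / (\<pi> x 1 * (1 - \<pi> x 0))"
          using gam pos unfolding gamma_true_def by (metis exp_ln)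
        moreover have "exp (a1 + b1 \<bullet> T x) = exp (a0 + b0 \<bullet> T x) * exp (gamma_model T \<theta>s x)"
          unfolding gamma_model_def th by (simp add: exp_add[symmetric] inner_diff_left)
        ultimately have "omega_tilt T \<theta>s x 1 = exp (a0 + b0 \<bullet> T x) * ((1 - \<pi> x 1) * \<pi> x 0 / (\<pi> x 1 * (1 - \<pi> x 0)))"
          unfolding omega_tilt_def th by simp
        then show ?thesis using b0 b1 unfolding y K_def by (simp add: field_simps)
      qed
    qed
    define H where "H \<omega> = omega_tilt T \<theta>s (X \<omega>) (Y \<omega>) * Dv \<omega> / p1" for \<omega>
    define I where "I \<omega> = (R \<omega> / p1 * omega_tilt T \<theta>s (X \<omega>) (Y \<omega>) - (1 - R \<omega>) / p0) * Dv \<omega>" for \<omega>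
    have Hm: "H \<in> borel_measurable FXY" unfolding H_def Dv_def
      by (rule mXY[of "\<lambda>x y. omega_tilt T \<theta>s x y * (\<tau> x y - m0_tau \<tau> T \<theta>s (eta1 \<xi>s) x) / p1"])
         (unfold m0_tau_def, measurable)
    have HmM[measurable]: "H \<in> borel_measurable M" by (rule measurable_from_subalg[OF subXY Hm])
    have intI: "integrable M I" using int_DR0 unfolding I_def Dv_def .
    have IM[measurable]: "I \<in> borel_measurable M" using intI by auto
    have int_RH: "integrable M (\<lambda>\<omega>. H \<omega> * R \<omega>)"
    proof (rule Bochner_Integration.integrable_bound[OF intI])
      show "(\<lambda>\<omega>. H \<omega> * R \<omega>) \<in> borel_measurable M" by measurable
      show "AE \<omega> in M. norm (H \<omega> * R \<omega>) \<le> norm (I \<omega>)"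
      proof (rule AE_I2)
        fix \<omega> assume "\<omega> \<in> space M"
        then have "R \<omega> = 0 \<or> R \<omega> = 1" using R_01 by auto
        then show "norm (H \<omega> * R \<omega>) \<le> norm (I \<omega>)" unfolding H_def I_def by auto
      qed
    qed
    have Q_eq: "(\<lambda>\<omega>. (1 - R \<omega>) * Dv \<omega> / p0) = (\<lambda>\<omega>. H \<omega> * R \<omega> - I \<omega>)"
      unfolding H_def I_def by (rule ext) (simp add: algebra_simps)
    have int_Q: "integrable M (\<lambda>\<omega>. (1 - R \<omega>) * Dv \<omega> / p0)"
      unfolding Q_eq using int_RH intI by simp
    have I_eq: "I = (\<lambda>\<omega>. H \<omega> * R \<omega> - (1 - R \<omega>) * Dv \<omega> / p0)"
      unfolding H_def I_def by (rule ext) (simp add: algebra_simps)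
    have Q0: "(\<integral>\<omega>. (1 - R \<omega>) * Dv \<omega> / p0 \<partial>M) = 0"
    proof -
      have eqQ: "(1 - R \<omega>) * Dv \<omega> / p0 = (1 - R \<omega>) * (\<delta> (X \<omega>) / p0) * (Y \<omega> - m (X \<omega>))" if "\<omega> \<in> space M" for \<omega>
        using D_eq[OF that] by simp
      have "(\<integral>\<omega>. (1 - R \<omega>) * Dv \<omega> / p0 \<partial>M) = (\<integral>\<omega>. (1 - R \<omega>) * (\<delta> (X \<omega>) / p0) * (Y \<omega> - m (X \<omega>)) \<partial>M)"
        by (rule Bochner_Integration.integral_cong) (auto simp: eqQ)
      also have "\<dots> = 0"
      proof (rule gen_A[of "\<lambda>x. \<delta> x / p0"])
        show "(\<lambda>x. \<delta> x / p0) \<in> borel_measurable borel" by measurable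
        show "integrable M (\<lambda>\<omega>. (1 - R \<omega>) * (\<delta> (X \<omega>) / p0) * (Y \<omega> - m (X \<omega>)))"
          by (rule Bochner_Integration.integrable_cong[THEN iffD1, OF refl _ int_Q]) (auto simp: eqQ)
      qed
      finally show ?thesis .
    qed
    have RH0: "(\<integral>\<omega>. H \<omega> * R \<omega> \<partial>M) = 0"
    proof -
      define L where "L \<omega> = K (X \<omega>) * \<delta> (X \<omega>) * (Y \<omega> - m (X \<omega>)) / p1" for \<omega>
      define g' where "g' \<omega> = max 0 (1 - R \<omega>)" for \<omega>
      have Lm: "L \<in> borel_measurable FXY" unfolding L_def
        by (rule mXY[of "\<lambda>x y. K x * \<delta> x * (y - m x) / p1"]) measurable
      have LmM[measurable]: "L \<in> borel_measurable M" by (rule measurable_from_subalg[OF subXY Lm])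
      have g'm[measurable]: "g' \<in> borel_measurable M" unfolding g'_def by measurable
      have intg': "integrable M g'"
        by (rule P.integrable_const_bound[where B=1]) (use R_01 in \<open>auto simp: g'_def intro!: AE_I2\<close>)
      have int1: "integrable M (\<lambda>\<omega>. (1::real))" by simp
      have one_m: "(\<lambda>\<omega>. 1::real) \<in> borel_measurable FXY" by simp
      have e1: "AE \<omega> in M. real_cond_exp M FXY g' \<omega> = real_cond_exp M FXY (\<lambda>\<omega>. 1 - R \<omega>) \<omega>"
        by (rule XY.real_cond_exp_cong) (use R_01 in \<open>auto simp: g'_def intro!: AE_I2\<close>)
      have e2: "AE \<omega> in M. real_cond_exp M FXY (\<lambda>\<omega>. 1 - R \<omega>) \<omega> = real_cond_exp M FXY (\<lambda>\<omega>. 1) \<omega> - real_cond_exp M FXY R \<omega>"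
        by (rule XY.real_cond_exp_diff) (use intR in auto)
      have e3: "AE \<omega> in M. real_cond_exp M FXY (\<lambda>\<omega>. 1) \<omega> = 1"
        using XY.real_cond_exp_F_meas[OF int1 one_m] by simp
      have Eg': "AE \<omega> in M. real_cond_exp M FXY g' \<omega> = 1 - \<pi> (X \<omega>) (Y \<omega>)"
        using e1 e2 e3 \<pi>_version by eventually_elim simp
      have ptw: "AE \<omega> in M. H \<omega> * real_cond_exp M FXY R \<omega> = L \<omega> * real_cond_exp M FXY g' \<omega>"
        using Eg' \<pi>_version AE_space
      proof eventually_elim
        case (elim \<omega>)
        then have "Y \<omega> = 0 \<or> Y \<omega> = 1" using Y_01 by auto
        then have k: "\<pi> (X \<omega>) (Y \<omega>) * omega_tilt T \<theta>s (X \<omega>) (Y \<omega>) = (1 - \<pi> (X \<omega>) (Y \<omega>)) * K (X \<omega>)"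
          by (rule key)
        have "H \<omega> * real_cond_exp M FXY R \<omega> = (\<pi> (X \<omega>) (Y \<omega>) * omega_tilt T \<theta>s (X \<omega>) (Y \<omega>)) * Dv \<omega> / p1"
          using elim unfolding H_def by simp
        also have "\<dots> = L \<omega> * real_cond_exp M FXY g' \<omega>"
          unfolding k L_def using elim D_eq[of \<omega>] by simp
        finally show ?case .
      qed
      have i1: "integrable M (\<lambda>\<omega>. H \<omega> * real_cond_exp M FXY R \<omega>)"
        by (rule XY.real_cond_exp_intg(1)) (use int_RH Hm in auto)
      have i2: "integrable M (\<lambda>\<omega>. L \<omega> * real_cond_exp M FXY g' \<omega>)"
        by (rule integrable_cong_AE[THEN iffD1, OF _ _ ptw i1]; measurable)
      have i3: "integrable M (\<lambda>\<omega>. L \<omega> * g' \<omega>)"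
        by (rule XY.integrable_from_cond_exp[OF Lm g'm _ intg' i2]) (simp add: g'_def)
      have eqL: "L \<omega> * g' \<omega> = (1 - R \<omega>) * (K (X \<omega>) * \<delta> (X \<omega>) / p1) * (Y \<omega> - m (X \<omega>))" if "\<omega> \<in> space M" for \<omega>
      proof -
        have "R \<omega> = 0 \<or> R \<omega> = 1" using R_01 that by auto
        then show ?thesis unfolding L_def g'_def by auto
      qed
      have "(\<integral>\<omega>. H \<omega> * R \<omega> \<partial>M) = (\<integral>\<omega>. H \<omega> * real_cond_exp M FXY R \<omega> \<partial>M)"
        by (rule XY.real_cond_exp_intg(2)[symmetric]) (use int_RH Hm in auto)
      also have "\<dots> = (\<integral>\<omega>. L \<omega> * real_cond_exp M FXY g' \<omega> \<partial>M)"
        by (rule integral_cong_AE[OF _ _ ptw]; measurable)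
      also have "\<dots> = (\<integral>\<omega>. L \<omega> * g' \<omega> \<partial>M)"
        by (rule XY.real_cond_exp_intg(2)) (use i3 Lm in auto)
      also have "\<dots> = (\<integral>\<omega>. (1 - R \<omega>) * (K (X \<omega>) * \<delta> (X \<omega>) / p1) * (Y \<omega> - m (X \<omega>)) \<partial>M)"
        by (rule Bochner_Integration.integral_cong) (auto simp: eqL)
      also have "\<dots> = 0"
      proof (rule gen_A[of "\<lambda>x. K x * \<delta> x / p1"])
        show "(\<lambda>x. K x * \<delta> x / p1) \<in> borel_measurable borel" by measurable
        show "integrable M (\<lambda>\<omega>. (1 - R \<omega>) * (K (X \<omega>) * \<delta> (X \<omega>) / p1) * (Y \<omega> - m (X \<omega>)))"
          by (rule Bochner_Integration.integrable_cong[THEN iffD1, OF refl _ i3]) (auto simp: eqL)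
      qed
      finally show ?thesis .
    qed
    have "(\<integral>\<omega>. I \<omega> \<partial>M) = (\<integral>\<omega>. H \<omega> * R \<omega> \<partial>M) - (\<integral>\<omega>. (1 - R \<omega>) * Dv \<omega> / p0 \<partial>M)"
      unfolding I_eq by (rule Bochner_Integration.integral_diff[OF int_RH int_Q])
    then have "(\<integral>\<omega>. I \<omega> \<partial>M) = 0" using RH0 Q0 by simp
    then show ?thesis unfolding I_def Dv_def .
  qed
  show ?thesis
    apply (intro conjI impI)
    subgoal by (rule gen_i[OF _ tauXY int_IW0])
    subgoal premises p using gen_i[OF p tauXY int_IW0] IW_int[of "\<lambda>\<omega>. \<tau> (X \<omega>) (Y \<omega>)"] by simp
    subgoal by (rule gen_i[OF _ DXY int_DR0])
    subgoal premises p using gen_i[OF p DXY int_DR0] IW_int[of "\<lambda>\<omega>. \<tau> (X \<omega>) (Y \<omega>) - m0_tau \<tau> T \<theta>s (eta1 \<xi>s) (X \<omega>)"] by simp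
    subgoal by (rule part2) auto
    subgoal premises p using part2[OF conjunct1[OF p] conjunct2[OF p]] IW_int[of "\<lambda>\<omega>. \<tau> (X \<omega>) (Y \<omega>) - m0_tau \<tau> T \<theta>s (eta1 \<xi>s) (X \<omega>)"] by simp
    done
qed
end
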